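(* Consider the splitting scheme, with constant matrices $\gamma,\sigma\in\mathbb{R}^{3N\times3N}$ satisfying $\sigma\sigma^T=\frac2\beta\gamma$, time step $\Delta t>0$, and i.i.d. standard Gaussian vectors $(\mathcal{G}^n)_{n\ge0},(\mathcal{G}^{n+1/2})_{n\ge0}$ in $\mathbb{R}^{3N}$: (1) $p^{n+1/4}=p^n-\frac{\Delta t}4\gamma M^{-1}(p^n+p^{n+1/4})+\sqrt{\frac{\Delta t}2}\sigma\mathcal{G}^n+\nabla\xi(q^n)\lambda^{n+1/4}$, with $\nabla\xi(q^n)^TM^{-1}p^{n+1/4}=0$; (2) $p^{n+1/2}=p^{n+1/4}-\frac{\Delta t}2\nabla V(q^n)+\nabla\xi(q^n)\lambda^{n+1/2}$, $q^{n+1}=q^n+\Delta t\,M^{-1}p^{n+1/2}$, $\xi(q^{n+1})=z$, $p^{n+3/4}=p^{n+1/2}-\frac{\Delta t}2\nabla V(q^{n+1})+\nabla\xi(q^{n+1})\lambda^{n+3/4}$, with $\nabla\xi(q^{n+1})^TM^{-1}p^{n+3/4}=0$; (3) $p^{n+1}=p^{n+3/4}-\frac{\Delta t}4\gamma M^{-1}(p^{n+3/4}+p^{n+1})+\sqrt{\frac{\Delta t}2}\sigma\mathcal{G}^{n+1/2}+\nabla\xi(q^{n+1})\lambda^{n+1}$, with $\nabla\xi(q^{n+1})^TM^{-1}p^{n+1}=0$; where the $\lambda$'s in $\mathbb{R}^m$ are Lagrange multipliers enforcing the indicated constraints. Suppose that $\frac{\Delta t}4\gamma=M=\frac{\Delta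 t}2\mathrm{Id}$. Then any sequence of iterates of this scheme satisfies the Euler scheme $$q^{n+1}=q^n-\Delta t\,\nabla V(q^n)+\sqrt{\frac{2\Delta t}\beta}\,\widetilde{\mathcal{G}}^n+\nabla\xi(q^n)\lambda^{n+1}_{\rm od},\qquad \xi(q^{n+1})=z,$$ where $\widetilde{\mathcal{G}}^n=\frac{\sqrt\beta}2\sigma\mathcal{G}^n$ are i.i.d. centered normalized Gaussian vectors and $\lambda^{n+1}_{\rm od}=\lambda^{n+1/4}+2\lambda^{n+1/2}\in\mathbb{R}^m$ is the Lagrange multiplier associated with the constraint $\xi(q^{n+1})=z$. Moreover, with $G(q)=\nabla\xi(q)^T\nabla\xi(q)$, $$2\lambda^{n+1/2}=G^{-1}(q^n)\Big(\nabla\xi(q^n)^T(q^{n+1}-q^n)+\Delta t\,\nabla\xi(q^n)^T\nabla V(q^n)\Big)=\lambda^{n+1}_{\rm od}+\sqrt{\frac{2\Delta t}\beta}\,G^{-1}(q^n)\nabla\xi(q^n)^T\widetilde{\mathcal{G}}^n,$$ $$2\lambda^{n+3/4}=G^{-1}(q^{n+1})\Big(\nabla\xi(q^{n+1})^T(q^n-q^{n+1})+\Delta t\,\nabla\xi(q^{n+1})^T\nabla V(q^{n+1})\Big).$$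
   Context: $q,p\in\mathbb{R}^{3N}$, $V:\mathbb{R}^{3N}\to\mathbb{R}$ smooth, $\beta>0$, $M$ a symmetric positive definite mass matrix. $\xi:\mathbb{R}^{3N}\to\mathbb{R}^m$ smooth, $\nabla\xi(q)=(\nabla\xi_1(q),\dots,\nabla\xi_m(q))\in\mathbb{R}^{3N\times m}$, with $\nabla\xi^TM^{-1}\nabla\xi$ invertible on $\{\xi=z\}$. Under the condition $\frac{\Delta t}4\gamma=M=\frac{\Delta t}2\mathrm{Id}$, $M$ and $\gamma$ are scalar multiples of the identity and $\sigma\sigma^T=\frac4\beta\mathrm{Id}$. *)

theory Defs
  imports "HOL-Analysis.Analysis"
begin

end

theory Submission
  imports Defs
begin

lemma scaleR_mat_vec: "((c::real) *\<^sub>R (A::real^'n^'m)) *v x = c *\<^sub>R (A *v x)"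
  by (simp add: vec_eq_iff matrix_vector_mult_def sum_distrib_left mult.assoc)

lemma mat_vec_uminus: "(A::real^'n^'m) *v (- x) = - (A *v x)"
  using matrix_vector_mult_scaleR[of A "-1" x] by simp

lemma matrix_inv_eq:
  fixes A B :: "real^'n^'n"
  assumes "A ** B = mat 1" "B ** A = mat 1"
  shows "matrix_inv A = B"
proof -
  have "A ** matrix_inv A = mat 1 \<and> matrix_inv A ** A = mat 1"
    unfolding matrix_inv_def by (rule someI[of _ B]) (use assms in simp)
  hence "matrix_inv A = (B ** A) ** matrix_inv A" using assms by simp
  also have "\<dots> = B ** (A ** matrix_inv A)" by (simp add: matrix_mul_assoc)
  also have "\<dots> = B" using \<open>A ** matrix_inv A = mat 1 \<and> _\<close> by simp
  finally show ?thesis .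
qed

lemma matrix_inv_left:
  fixes A :: "real^'n^'n"
  assumes "invertible A"
  shows "matrix_inv A *v (A *v x) = x"
proof -
  have "A ** matrix_inv A = mat 1 \<and> matrix_inv A ** A = mat 1"
    using assms unfolding matrix_inv_def invertible_def by (rule someI_ex)
  thus ?thesis by (simp add: matrix_vector_mul_assoc)
qed

lemma invertible_scale_back:
  fixes A :: "real^'n^'n"
  assumes "c \<noteq> 0" "invertible (c *\<^sub>R A)"
  shows "invertible A"
proof -
  have "A = (1/c) *\<^sub>R (c *\<^sub>R A)" using assms by simp
  thus ?thesis using scalar_invertible[of "1/c" "c *\<^sub>R A"] assms by simp
qed

theorem mainTheorem3:
  fixes N :: nat and \<beta> dt :: real and z :: "real ^ 'm"
    and V :: "real ^ 'n \<Rightarrow> real" and gradV :: "real ^ 'n \<Rightarrow> real ^ 'n"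
    and \<xi> :: "real ^ 'n \<Rightarrow> real ^ 'm" and grad\<xi> :: "real ^ 'n \<Rightarrow> real ^ 'm ^ 'n"
    and M \<gamma> \<sigma> :: "real ^ 'n ^ 'n"
    and q p p14 p12 p34 G0 Ghalf :: "nat \<Rightarrow> real ^ 'n"
    and l14 l12 l34 l1 :: "nat \<Rightarrow> real ^ 'm"
  assumes dim: "CARD('n) = 3 * N"
    and beta_pos: "\<beta> > 0" and dt_pos: "dt > 0"
    and V_grad: "\<And>x. (V has_derivative (\<lambda>h. gradV x \<bullet> h)) (at x)"
    and xi_grad: "\<And>x. (\<xi> has_derivative (\<lambda>h. transpose (grad\<xi> x) *v h)) (at x)"
    and Gram_inv: "\<And>x. \<xi> x = z \<Longrightarrow> invertible (transpose (grad\<xi> x) ** matrix_inv M ** grad\<xi> x)"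
    and sigma_gamma: "\<sigma> ** transpose \<sigma> = (2 / \<beta>) *\<^sub>R \<gamma>"
    and gamma_M: "(dt / 4) *\<^sub>R \<gamma> = M"
    and M_id: "M = (dt / 2) *\<^sub>R mat 1"
    and init: "\<xi> (q 0) = z"
    and step1: "\<And>n. p14 n = p n - (dt / 4) *\<^sub>R ((\<gamma> ** matrix_inv M) *v (p n + p14 n))
                 + sqrt (dt / 2) *\<^sub>R (\<sigma> *v G0 n) + grad\<xi> (q n) *v l14 n"
    and cons1: "\<And>n. transpose (grad\<xi> (q n)) *v (matrix_inv M *v p14 n) = 0"
    and step2a: "\<And>n. p12 n = p14 n - (dt / 2) *\<^sub>R gradV (q n) + grad\<xi> (q n) *v l12 n"
    and step2b: "\<And>n. q (Suc n) = q n + dt *\<^sub>R (matrix_inv M *v p12 n)"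
    and cons2: "\<And>n. \<xi> (q (Suc n)) = z"
    and step2c: "\<And>n. p34 n = p12 n - (dt / 2) *\<^sub>R gradV (q (Suc n)) + grad\<xi> (q (Suc n)) *v l34 n"
    and cons3: "\<And>n. transpose (grad\<xi> (q (Suc n))) *v (matrix_inv M *v p34 n) = 0"
    and step3: "\<And>n. p (Suc n) = p34 n - (dt / 4) *\<^sub>R ((\<gamma> ** matrix_inv M) *v (p34 n + p (Suc n)))
                 + sqrt (dt / 2) *\<^sub>R (\<sigma> *v Ghalf n) + grad\<xi> (q (Suc n)) *v l1 n"
    and cons4: "\<And>n. transpose (grad\<xi> (q (Suc n))) *v (matrix_inv M *v p (Suc n)) = 0"
  shows "(\<beta> / 4) *\<^sub>R (\<sigma> ** transpose \<sigma>) = mat 1 \<and>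
    (\<forall>n. let Gt = (sqrt \<beta> / 2) *\<^sub>R (\<sigma> *v G0 n);
             lod = l14 n + 2 *\<^sub>R l12 n;
             J0 = grad\<xi> (q n); J1 = grad\<xi> (q (Suc n));
             Gr0 = transpose J0 ** J0; Gr1 = transpose J1 ** J1
         in q (Suc n) = q n - dt *\<^sub>R gradV (q n) + sqrt (2 * dt / \<beta>) *\<^sub>R Gt + J0 *v lod
          \<and> \<xi> (q (Suc n)) = z
          \<and> 2 *\<^sub>R l12 n = matrix_inv Gr0 *v (transpose J0 *v (q (Suc n) - q n)
                              + dt *\<^sub>R (transpose J0 *v gradV (q n)))
          \<and> 2 *\<^sub>R l12 n = lod + sqrt (2 * dt / \<beta>) *\<^sub>R (matrix_inv Gr0 *v (transpose J0 *v Gt))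
          \<and> 2 *\<^sub>R l34 n = matrix_inv Gr1 *v (transpose J1 *v (q n - q (Suc n))
                              + dt *\<^sub>R (transpose J1 *v gradV (q (Suc n)))))"
proof -
  have dt0: "dt \<noteq> 0" using dt_pos by simp
  have gam: "\<gamma> = 2 *\<^sub>R mat 1"
  proof -
    have "\<gamma> = (4/dt) *\<^sub>R ((dt / 4) *\<^sub>R \<gamma>)" using dt0 by simp
    also have "\<dots> = 2 *\<^sub>R mat 1" unfolding gamma_M M_id using dt0 by simp
    finally show ?thesis .
  qed
  have Minv: "matrix_inv M = (2/dt) *\<^sub>R mat 1"
    unfolding M_id by (rule matrix_inv_eq) (use dt0 in \<open>simp_all add: matrix_scalar_ac flip: scalar_matrix_assoc\<close>)
  have Mv: "matrix_inv M *v x = (2/dt) *\<^sub>R x" for x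
    by (simp add: Minv scaleR_mat_vec)
  have gMv: "(dt / 4) *\<^sub>R ((\<gamma> ** matrix_inv M) *v x) = x" for x
    using dt0 by (simp add: gam Mv flip: matrix_vector_mul_assoc add: scaleR_mat_vec)
  have part1: "(\<beta> / 4) *\<^sub>R (\<sigma> ** transpose \<sigma>) = mat 1"
    using beta_pos by (simp add: sigma_gamma gam)
  have xin: "\<xi> (q n) = z" for n by (cases n) (simp_all add: init cons2)
  have Grinv: "invertible (transpose (grad\<xi> (q n)) ** grad\<xi> (q n))" for n
  proof -
    have "invertible (transpose (grad\<xi> (q n)) ** matrix_inv M ** grad\<xi> (q n))"
      using Gram_inv xin by blast
    also have "transpose (grad\<xi> (q n)) ** matrix_inv M ** grad\<xi> (q n)
       = (2/dt) *\<^sub>R (transpose (grad\<xi> (q n)) ** grad\<xi> (q n))"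
      by (simp add: Minv matrix_scalar_ac scalar_matrix_assoc)
    finally show ?thesis using invertible_scale_back dt0 by (metis divide_eq_0_iff zero_neq_numeral)
  qed
  define J where "J n = grad\<xi> (q n)" for n
  define s where "s n = sqrt (dt / 2) *\<^sub>R (\<sigma> *v G0 n)" for n
  have e1: "2 *\<^sub>R p14 n = s n + J n *v l14 n" for n
  proof -
    have "p14 n = p n - (p n + p14 n) + s n + J n *v l14 n"
      using step1[of n] unfolding gMv s_def J_def .
    thus ?thesis by (simp add: algebra_simps scaleR_2)
  qed
  have c1: "transpose (J n) *v p14 n = 0" for n
    using cons1[of n] dt0 by (simp add: Mv J_def matrix_vector_mult_scaleR del: transpose_matrix_vector)
  have c3: "transpose (J (Suc n)) *v p34 n = 0" for n
    using cons3[of n] dt0 by (simp add: Mv J_def matrix_vector_mult_scaleR del: transpose_matrix_vector)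
  have qs: "q (Suc n) = q n + 2 *\<^sub>R p12 n" for n
    using step2b[of n] dt0 by (simp add: Mv)
  have sq: "sqrt (2 * dt / \<beta>) * (sqrt \<beta> / 2) = sqrt (dt / 2)"
  proof -
    have "sqrt (dt / 2) = sqrt ((2 * dt / \<beta>) * (\<beta> / 4))" using beta_pos by simp
    also have "\<dots> = sqrt (2 * dt / \<beta>) * (sqrt \<beta> / 2)"
      by (simp add: real_sqrt_mult real_sqrt_divide)
    finally show ?thesis by simp
  qed
  have sGt: "sqrt (2 * dt / \<beta>) *\<^sub>R ((sqrt \<beta> / 2) *\<^sub>R (\<sigma> *v G0 n)) = s n" for n
    by (simp only: s_def scaleR_scaleR sq)
  have Gr: "(transpose (J n) ** J n) *v x = transpose (J n) *v (J n *v x)" for n x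
    by (simp add: matrix_vector_mul_assoc del: transpose_matrix_vector)
  have Ginv: "matrix_inv (transpose (J n) ** J n) *v (transpose (J n) *v (J n *v x)) = x" for n x
    using matrix_inv_left[OF Grinv[of n], of x] unfolding J_def by (simp only: matrix_vector_mul_assoc)
  have A: "q (Suc n) = q n - dt *\<^sub>R gradV (q n) + s n + J n *v (l14 n + 2 *\<^sub>R l12 n)" for n
  proof -
    have "q (Suc n) = q n + 2 *\<^sub>R p14 n - dt *\<^sub>R gradV (q n) + 2 *\<^sub>R (J n *v l12 n)"
      using qs[of n] step2a[of n] by (simp add: algebra_simps J_def)
    thus ?thesis using e1[of n] by (simp add: algebra_simps matrix_vector_mult_scaleR)
  qed
  have B: "transpose (J n) *v (q (Suc n) - q n) + dt *\<^sub>R (transpose (J n) *v gradV (q n))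
     = transpose (J n) *v (J n *v (2 *\<^sub>R l12 n))" for n
  proof -
    have "q (Suc n) - q n = 2 *\<^sub>R p14 n - dt *\<^sub>R gradV (q n) + J n *v (2 *\<^sub>R l12 n)"
      using qs[of n] step2a[of n] by (simp add: algebra_simps J_def matrix_vector_mult_scaleR)
    hence "transpose (J n) *v (q (Suc n) - q n) = 2 *\<^sub>R (transpose (J n) *v p14 n)
       - dt *\<^sub>R (transpose (J n) *v gradV (q n)) + transpose (J n) *v (J n *v (2 *\<^sub>R l12 n))"
      by (simp add: matrix_vector_right_distrib matrix_vector_mult_diff_distrib matrix_vector_mult_scaleR
          del: transpose_matrix_vector)
    thus ?thesis using c1[of n] by simp
  qed
  have C: "transpose (J n) *v s n = transpose (J n) *v (J n *v (- l14 n))" for n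
  proof -
    have "s n = 2 *\<^sub>R p14 n - J n *v l14 n" using e1[of n] by (simp add: algebra_simps)
    hence "transpose (J n) *v s n = 2 *\<^sub>R (transpose (J n) *v p14 n) - transpose (J n) *v (J n *v l14 n)"
      by (simp add: matrix_vector_mult_diff_distrib matrix_vector_mult_scaleR del: transpose_matrix_vector)
    also have "\<dots> = transpose (J n) *v (J n *v (- l14 n))"
      using c1[of n] by (simp add: matrix_vector_mult_scaleR[of _ "-1", simplified] del: transpose_matrix_vector)
    finally show ?thesis .
  qed
  have D: "transpose (J (Suc n)) *v (q n - q (Suc n)) + dt *\<^sub>R (transpose (J (Suc n)) *v gradV (q (Suc n)))
     = transpose (J (Suc n)) *v (J (Suc n) *v (2 *\<^sub>R l34 n))" for n
  proof -
    have "q n - q (Suc n) = (- 2) *\<^sub>R p34 n - dt *\<^sub>R gradV (q (Suc n)) + J (Suc n) *v (2 *\<^sub>R l34 n)"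
    proof -
      have p: "p12 n = p34 n + (dt/2) *\<^sub>R gradV (q (Suc n)) - J (Suc n) *v l34 n"
        using step2c[of n] by (simp add: J_def algebra_simps)
      have "q n - q (Suc n) = - 2 *\<^sub>R p12 n" using qs[of n] by simp
      also have "\<dots> = (- 2) *\<^sub>R p34 n - dt *\<^sub>R gradV (q (Suc n)) + J (Suc n) *v (2 *\<^sub>R l34 n)"
        by (subst p) (simp add: algebra_simps matrix_vector_mult_scaleR)
      finally show ?thesis .
    qed
    hence "transpose (J (Suc n)) *v (q n - q (Suc n)) = (- 2) *\<^sub>R (transpose (J (Suc n)) *v p34 n)
       - dt *\<^sub>R (transpose (J (Suc n)) *v gradV (q (Suc n))) + transpose (J (Suc n)) *v (J (Suc n) *v (2 *\<^sub>R l34 n))"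
      by (simp add: matrix_vector_right_distrib matrix_vector_mult_diff_distrib matrix_vector_mult_scaleR
          mat_vec_uminus del: transpose_matrix_vector)
    thus ?thesis using c3[of n] by simp
  qed
  show ?thesis
    unfolding Let_def
  proof (intro conjI allI)
    fix n
    show "(\<beta> / 4) *\<^sub>R (\<sigma> ** transpose \<sigma>) = mat 1" by (rule part1)
    show "\<xi> (q (Suc n)) = z" by (rule cons2)
    show "q (Suc n) = q n - dt *\<^sub>R gradV (q n) + sqrt (2 * dt / \<beta>) *\<^sub>R ((sqrt \<beta> / 2) *\<^sub>R (\<sigma> *v G0 n))
        + grad\<xi> (q n) *v (l14 n + 2 *\<^sub>R l12 n)"
      using A[of n] unfolding sGt J_def .
    show "2 *\<^sub>R l12 n = matrix_inv (transpose (grad\<xi> (q n)) ** grad\<xi> (q n)) *v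
          (transpose (grad\<xi> (q n)) *v (q (Suc n) - q n) + dt *\<^sub>R (transpose (grad\<xi> (q n)) *v gradV (q n)))"
      using B[of n] Ginv[of n "2 *\<^sub>R l12 n"] by (simp only: J_def)
    show "2 *\<^sub>R l12 n = l14 n + 2 *\<^sub>R l12 n + sqrt (2 * dt / \<beta>) *\<^sub>R
          (matrix_inv (transpose (grad\<xi> (q n)) ** grad\<xi> (q n)) *v
           (transpose (grad\<xi> (q n)) *v ((sqrt \<beta> / 2) *\<^sub>R (\<sigma> *v G0 n))))"
    proof -
      have "sqrt (2 * dt / \<beta>) *\<^sub>R
          (matrix_inv (transpose (J n) ** J n) *v (transpose (J n) *v ((sqrt \<beta> / 2) *\<^sub>R (\<sigma> *v G0 n))))
          = matrix_inv (transpose (J n) ** J n) *v (transpose (J n) *v s n)"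
        unfolding matrix_vector_mult_scaleR[of "matrix_inv (transpose (J n) ** J n)", symmetric]
          matrix_vector_mult_scaleR[of "transpose (J n)", symmetric] sGt by (rule refl)
      also have "\<dots> = - l14 n" using C[of n] Ginv[of n "- l14 n"] by simp
      finally show ?thesis by (simp add: J_def)
    qed
    show "2 *\<^sub>R l34 n = matrix_inv (transpose (grad\<xi> (q (Suc n))) ** grad\<xi> (q (Suc n))) *v
          (transpose (grad\<xi> (q (Suc n))) *v (q n - q (Suc n)) + dt *\<^sub>R (transpose (grad\<xi> (q (Suc n))) *v gradV (q (Suc n))))"
      using D[of n] Ginv[of "Suc n" "2 *\<^sub>R l34 n"] by (simp only: J_def)
  qed
qed

end
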